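(* For all integers $\alpha,k,\ell$ with $k \geq \ell \geq 2$ and $\alpha \geq 2$, there exists an $(\alpha,k,\ell)$-gadget $(G,A)$; moreover, for fixed $k,\ell$, such a gadget can be chosen with $|V(G)|+|E(G)| = O(\alpha)$.
   Context: All graphs are finite and loopless but may have parallel edges. A linear forest is a graph each of whose components is a path; it is $k$-bounded if each component has at most $k$ edges. A $(k,\ell)$-bounded linear forest decomposition of $G$ is a pair $(F,F')$ of spanning subgraphs whose edge sets partition $E(G)$, with $F$ a $k$-bounded linear forest and $F'$ an $\ell$-bounded linear forest. For a graph $G$, a set $A\subseteq V(G)$ all of whose vertices have degree $1$ in $G$, a positive integer $m$ and a linear forest $L$ in $G$, we say $A$ is $(m,L)$-covered if every $a \in A$ is an endpoint of a path of length $m$ (i.e. with $m$ edges) in $L$. An $(\alpha,k,\ell)$-gadget is a pair $(G,A)$ with $A\subseteq V(G)$ such that: (1) $d_G(a)=1$ for all $a\in A$; (2) $|A|=\alpha$; (3) there is a $(k,\ell)$-bounded linear forest decomposition $(F,F')$ of $G$ in which $A$ is $(k,F)$-covered; (4) there is a $(k,\ell)$-bounded linear forest decomposition $(F,F')$ of $G$ in which $A$ is $(\ell,F')$-covered; (5) for every $(k,\ell)$-bounded linear forest decomposition $(F,F')$ of $G$, $A$ is $(k,F)$-covered or $A$ is $(\ell,F')$-covered. *)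

theory Defs
  imports Main
begin

text \<open>A finite loopless multigraph: vertex set V, edge set E, and an endpoint map
  ends assigning to each edge a 2-element set of vertices (parallel edges allowed).\<close>

definition multigraph :: "'v set \<Rightarrow> 'e set \<Rightarrow> ('e \<Rightarrow> 'v set) \<Rightarrow> bool" where
  "multigraph V E ends \<longleftrightarrow> finite V \<and> finite E \<and>
     (\<forall>e\<in>E. ends e \<subseteq> V \<and> card (ends e) = 2)"

definition degree :: "'e set \<Rightarrow> ('e \<Rightarrow> 'v set) \<Rightarrow> 'v \<Rightarrow> nat" where
  "degree E ends v = card {e\<in>E. v \<in> ends e}"

definition is_path :: "'e set \<Rightarrow> ('e \<Rightarrow> 'v set) \<Rightarrow> 'v list \<Rightarrow> 'e list \<Rightarrow> bool" where
  "is_path F ends vs es \<longleftrightarrow> length vs = Suc (length es) \<and> distinct vs \<and> distinct es \<and>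
     (\<forall>i<length es. es ! i \<in> F \<and> ends (es ! i) = {vs ! i, vs ! Suc i})"

definition adj :: "'e set \<Rightarrow> ('e \<Rightarrow> 'v set) \<Rightarrow> ('v \<times> 'v) set" where
  "adj F ends = {(u, v). \<exists>e\<in>F. ends e = {u, v}}"

definition component :: "'e set \<Rightarrow> ('e \<Rightarrow> 'v set) \<Rightarrow> 'v \<Rightarrow> 'v set" where
  "component F ends v = {u. (v, u) \<in> (adj F ends)\<^sup>*}"

definition bounded_linear_forest ::
  "'v set \<Rightarrow> 'e set \<Rightarrow> ('e \<Rightarrow> 'v set) \<Rightarrow> nat \<Rightarrow> bool" where
  "bounded_linear_forest V F ends k \<longleftrightarrow>
     (\<forall>v\<in>V. \<exists>vs es. is_path F ends vs es \<and> set vs = component F ends v \<and>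
        set es = {e\<in>F. ends e \<subseteq> component F ends v} \<and> length es \<le> k)"

definition bounded_lfd ::
  "'v set \<Rightarrow> 'e set \<Rightarrow> ('e \<Rightarrow> 'v set) \<Rightarrow> nat \<Rightarrow> nat \<Rightarrow> 'e set \<Rightarrow> bool" where
  "bounded_lfd V E ends k l F \<longleftrightarrow> F \<subseteq> E \<and>
     bounded_linear_forest V F ends k \<and> bounded_linear_forest V (E - F) ends l"

definition covered :: "'v set \<Rightarrow> nat \<Rightarrow> 'e set \<Rightarrow> ('e \<Rightarrow> 'v set) \<Rightarrow> bool" where
  "covered A m L ends \<longleftrightarrow> (\<forall>a\<in>A. \<exists>vs es. is_path L ends vs es \<and> length es = m \<and>
      (hd vs = a \<or> last vs = a))"

definition gadget ::
  "'v set \<Rightarrow> 'e set \<Rightarrow> ('e \<Rightarrow> 'v set) \<Rightarrow> 'v set \<Rightarrow> nat \<Rightarrow> nat \<Rightarrow> nat \<Rightarrow> bool" where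
  "gadget V E ends A \<alpha> k l \<longleftrightarrow> multigraph V E ends \<and> A \<subseteq> V \<and>
     (\<forall>a\<in>A. degree E ends a = 1) \<and> card A = \<alpha> \<and>
     (\<exists>F. bounded_lfd V E ends k l F \<and> covered A k F ends) \<and>
     (\<exists>F. bounded_lfd V E ends k l F \<and> covered A l (E - F) ends) \<and>
     (\<forall>F. bounded_lfd V E ends k l F \<longrightarrow> covered A k F ends \<or> covered A l (E - F) ends)"

end

theory Submission
  imports Defs "HOL-Library.Nat_Bijection"
begin


lemma adj_sym: "(u, w) \<in> adj F ends \<Longrightarrow> (w, u) \<in> adj F ends"
  unfolding adj_def by (auto simp: insert_commute)

lemma path_reach0:
  assumes "is_path F ends vs es" "i < length vs"
  shows "(vs ! 0, vs ! i) \<in> (adj F ends)\<^sup>*"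
  using assms(2)
proof (induction i)
  case 0 then show ?case by simp
next
  case (Suc i)
  have "i < length es" using Suc.prems assms(1) unfolding is_path_def by simp
  then have "es ! i \<in> F \<and> ends (es ! i) = {vs ! i, vs ! Suc i}"
    using assms(1) unfolding is_path_def by blast
  then have "(vs ! i, vs ! Suc i) \<in> adj F ends" unfolding adj_def by blast
  with Suc show ?case by (meson Suc_lessD rtrancl.rtrancl_into_rtrancl)
qed

lemma rtrancl_adj_sym: "(u, w) \<in> (adj F ends)\<^sup>* \<Longrightarrow> (w, u) \<in> (adj F ends)\<^sup>*"
proof (induction rule: rtrancl_induct)
  case base then show ?case by simp
next
  case (step y z)
  then show ?case using adj_sym by (meson converse_rtrancl_into_rtrancl)
qed

lemma path_reach:
  assumes "is_path F ends vs es" "i < length vs" "j < length vs"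
  shows "(vs ! i, vs ! j) \<in> (adj F ends)\<^sup>*"
  using path_reach0[OF assms(1) assms(2)] path_reach0[OF assms(1) assms(3)]
  by (meson rtrancl_adj_sym rtrancl_trans)

lemma path_set_component:
  assumes "is_path F ends vs es" "u \<in> set vs"
  shows "set vs \<subseteq> component F ends u"
proof
  fix w assume "w \<in> set vs"
  then obtain j where j: "j < length vs" "vs ! j = w" by (auto simp: in_set_conv_nth)
  obtain i where i: "i < length vs" "vs ! i = u" using assms(2) by (auto simp: in_set_conv_nth)
  show "w \<in> component F ends u" using path_reach[OF assms(1) i(1) j(1)] i j
    unfolding component_def by simp
qed

lemma path_edge_ends:
  assumes "is_path F ends vs es" "e \<in> set es"
  shows "e \<in> F \<and> ends e \<subseteq> set vs"
proof -
  obtain i where i: "i < length es" "es ! i = e" using assms(2) by (auto simp: in_set_conv_nth)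
  have "length vs = Suc (length es)" using assms(1) unfolding is_path_def by simp
  then have "vs ! i \<in> set vs" "vs ! Suc i \<in> set vs" using i by auto
  then show ?thesis using assms(1) i unfolding is_path_def by auto
qed

lemma blf_from_comps:
  assumes paths: "\<And>v. v \<in> V \<Longrightarrow> is_path F ends (cv v) (ce v) \<and> v \<in> set (cv v) \<and> length (ce v) \<le> k"
    and cons: "\<And>v u. v \<in> V \<Longrightarrow> u \<in> set (cv v) \<Longrightarrow> u \<in> V \<and> cv u = cv v \<and> ce u = ce v"
    and cover: "\<And>e. e \<in> F \<Longrightarrow> \<exists>v\<in>V. e \<in> set (ce v)"
  shows "bounded_linear_forest V F ends k"
  unfolding bounded_linear_forest_def
proof
  fix v assume v: "v \<in> V"
  note P = paths[OF v]
  have C: "component F ends v = set (cv v)"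
  proof
    show "set (cv v) \<subseteq> component F ends v" using path_set_component[of F ends "cv v" "ce v" v] P by blast
    show "component F ends v \<subseteq> set (cv v)"
    proof
      fix w assume "w \<in> component F ends v"
      then have "(v, w) \<in> (adj F ends)\<^sup>*" unfolding component_def by simp
      then show "w \<in> set (cv v)"
      proof (induction rule: rtrancl_induct)
        case base then show ?case using P by simp
      next
        case (step u w)
        then obtain e where e: "e \<in> F" "ends e = {u, w}" unfolding adj_def by auto
        obtain v' where v': "v' \<in> V" "e \<in> set (ce v')" using cover[OF e(1)] by blast
        have "ends e \<subseteq> set (cv v')" using path_edge_ends[of F ends "cv v'" "ce v'" e] paths[OF v'(1)] v'(2) by blast
        then have "u \<in> set (cv v')" "w \<in> set (cv v')" using e by auto
        then have "cv u = cv v'" using cons[OF v'(1)] by blast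
        moreover have "cv u = cv v" using cons[OF v step.IH] by blast
        ultimately show ?case using \<open>w \<in> set (cv v')\<close> by simp
      qed
    qed
  qed
  have Es: "set (ce v) = {e \<in> F. ends e \<subseteq> component F ends v}"
  proof
    show "set (ce v) \<subseteq> {e \<in> F. ends e \<subseteq> component F ends v}"
      using path_edge_ends[of F ends "cv v" "ce v"] P C by blast
    show "{e \<in> F. ends e \<subseteq> component F ends v} \<subseteq> set (ce v)"
    proof
      fix e assume "e \<in> {e \<in> F. ends e \<subseteq> component F ends v}"
      then have e: "e \<in> F" "ends e \<subseteq> set (cv v)" using C by auto
      obtain v' where v': "v' \<in> V" "e \<in> set (ce v')" using cover[OF e(1)] by blast
      have pv': "is_path F ends (cv v') (ce v')" using paths[OF v'(1)] by blast
      obtain i where i: "i < length (ce v')" "ce v' ! i = e" using v'(2) by (auto simp: in_set_conv_nth)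
      have "ends e = {cv v' ! i, cv v' ! Suc i}" using pv' i unfolding is_path_def by auto
      then have u1: "cv v' ! i \<in> set (cv v)" using e(2) by auto
      have "length (cv v') = Suc (length (ce v'))" using pv' unfolding is_path_def by simp
      then have u2: "cv v' ! i \<in> set (cv v')" using i by auto
      have "ce (cv v' ! i) = ce v'" using cons[OF v'(1) u2] by blast
      moreover have "ce (cv v' ! i) = ce v" using cons[OF v u1] by blast
      ultimately show "e \<in> set (ce v)" using v'(2) by simp
    qed
  qed
  show "\<exists>vs es. is_path F ends vs es \<and> set vs = component F ends v \<and>
        set es = {e \<in> F. ends e \<subseteq> component F ends v} \<and> length es \<le> k"
    using P C Es by blast
qed

lemma blf_comp:
  assumes "bounded_linear_forest V F ends k" "v \<in> V"
  obtains vs es where "is_path F ends vs es" "set vs = component F ends v"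
    "set es = {e \<in> F. ends e \<subseteq> component F ends v}" "length es \<le> k"
  using assms unfolding bounded_linear_forest_def by blast

lemma path_bound:
  assumes B: "bounded_linear_forest V F ends k" and P: "is_path F ends vs es" and h: "hd vs \<in> V"
  shows "length es \<le> k"
proof -
  obtain cvs ces where c: "is_path F ends cvs ces" "set cvs = component F ends (hd vs)"
    "set ces = {e \<in> F. ends e \<subseteq> component F ends (hd vs)}" "length ces \<le> k"
    using blf_comp[OF B h] by blast
  have ne: "vs \<noteq> []" using P unfolding is_path_def by auto
  have "set vs \<subseteq> component F ends (hd vs)" using path_set_component[OF P] ne by simp
  then have "set es \<subseteq> set ces" using path_edge_ends[OF P] c(3) by blast
  then have "card (set es) \<le> card (set ces)" by (simp add: card_mono)
  also have "\<dots> \<le> length ces" by (rule card_length)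
  finally show ?thesis using P c(4) distinct_card unfolding is_path_def by fastforce
qed

lemma edge_in_comp:
  assumes "e \<in> F" "u \<in> ends e" "card (ends e) = 2"
  shows "ends e \<subseteq> component F ends u"
proof -
  obtain a b where ab: "ends e = {a, b}" "a \<noteq> b" using assms(3) by (meson card_2_iff)
  then obtain w where w: "ends e = {u, w}" using assms(2) by auto
  then have "(u, w) \<in> adj F ends" using assms(1) unfolding adj_def by blast
  then show ?thesis using w unfolding component_def by auto
qed

lemma edge_index:
  assumes P: "is_path F ends vs es" and e: "e \<in> set es" and p: "p < length vs" "vs ! p \<in> ends e"
  shows "\<exists>i<length es. es ! i = e \<and> (i = p \<or> Suc i = p)"
proof -
  obtain i where i: "i < length es" "es ! i = e" using e by (auto simp: in_set_conv_nth)
  have L: "length vs = Suc (length es)" and D: "distinct vs" using P unfolding is_path_def by auto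
  have "ends e = {vs ! i, vs ! Suc i}" using P i unfolding is_path_def by auto
  then have "vs ! p = vs ! i \<or> vs ! p = vs ! Suc i" using p by auto
  then have "p = i \<or> p = Suc i" using D p(1) L i(1) nth_eq_iff_index_eq by (metis Suc_mono less_SucI)
  then show ?thesis using i by auto
qed

lemma comp_vertex:
  assumes B: "bounded_linear_forest V F ends k" and u: "u \<in> V"
  obtains cvs ces p where "is_path F ends cvs ces" "p < length cvs" "cvs ! p = u"
    "\<And>e. e \<in> F \<Longrightarrow> u \<in> ends e \<Longrightarrow> card (ends e) = 2 \<Longrightarrow> e \<in> set ces"
proof -
  obtain cvs ces where c: "is_path F ends cvs ces" "set cvs = component F ends u"
    "set ces = {e \<in> F. ends e \<subseteq> component F ends u}" "length ces \<le> k"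
    using blf_comp[OF B u] by blast
  have "u \<in> set cvs" using c(2) unfolding component_def by simp
  then obtain p where "p < length cvs" "cvs ! p = u" by (auto simp: in_set_conv_nth)
  moreover have "\<And>e. e \<in> F \<Longrightarrow> u \<in> ends e \<Longrightarrow> card (ends e) = 2 \<Longrightarrow> e \<in> set ces"
  proof -
    fix e assume "e \<in> F" "u \<in> ends e" "card (ends e) = 2"
    then have "ends e \<subseteq> component F ends u" by (rule edge_in_comp)
    then show "e \<in> set ces" using c(3) \<open>e \<in> F\<close> by simp
  qed
  ultimately show ?thesis using that c(1) by blast
qed

lemma deg3:
  assumes B: "bounded_linear_forest V F ends k" and u: "u \<in> V"
    and e: "e1 \<in> F" "e2 \<in> F" "e3 \<in> F" "e1 \<noteq> e2" "e1 \<noteq> e3" "e2 \<noteq> e3"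
    and U: "u \<in> ends e1" "u \<in> ends e2" "u \<in> ends e3"
    and c: "card (ends e1) = 2" "card (ends e2) = 2" "card (ends e3) = 2"
  shows False
proof -
  obtain cvs ces p where P: "is_path F ends cvs ces" "p < length cvs" "cvs ! p = u"
    and I: "\<And>e. e \<in> F \<Longrightarrow> u \<in> ends e \<Longrightarrow> card (ends e) = 2 \<Longrightarrow> e \<in> set ces"
    using comp_vertex[OF B u] by blast
  obtain i1 where i1: "ces ! i1 = e1" "i1 = p \<or> Suc i1 = p"
    using edge_index[OF P(1) I[OF e(1) U(1) c(1)] P(2)] P(3) U by blast
  obtain i2 where i2: "ces ! i2 = e2" "i2 = p \<or> Suc i2 = p"
    using edge_index[OF P(1) I[OF e(2) U(2) c(2)] P(2)] P(3) U by blast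
  obtain i3 where i3: "ces ! i3 = e3" "i3 = p \<or> Suc i3 = p"
    using edge_index[OF P(1) I[OF e(3) U(3) c(3)] P(2)] P(3) U by blast
  have "i1 \<noteq> i2" "i1 \<noteq> i3" "i2 \<noteq> i3" using i1 i2 i3 e by auto
  then show False using i1(2) i2(2) i3(2) by arith
qed

lemma par2:
  assumes B: "bounded_linear_forest V F ends k" and u: "u \<in> V"
    and e: "e1 \<in> F" "e2 \<in> F" "e1 \<noteq> e2" "ends e1 = ends e2"
    and U: "u \<in> ends e1" and c: "card (ends e1) = 2"
  shows False
proof -
  obtain cvs ces p where P: "is_path F ends cvs ces" "p < length cvs" "cvs ! p = u"
    and I: "\<And>e. e \<in> F \<Longrightarrow> u \<in> ends e \<Longrightarrow> card (ends e) = 2 \<Longrightarrow> e \<in> set ces"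
    using comp_vertex[OF B u] by blast
  obtain a b where ab: "ends e1 = {a, b}" "a \<noteq> b" using c unfolding card_2_iff by blast
  have "\<exists>w. ends e1 = {u, w} \<and> u \<noteq> w" using ab U by auto
  then obtain w where w: "ends e1 = {u, w}" "u \<noteq> w" by blast
  have in1: "e1 \<in> set ces" "e2 \<in> set ces" using I e U c by auto
  have "w \<in> set cvs"
    using path_edge_ends[OF P(1) in1(1)] w by auto
  then obtain q where q: "q < length cvs" "cvs ! q = w" by (auto simp: in_set_conv_nth)
  have pq: "p \<noteq> q" using P q w by auto
  obtain i1 where i1: "ces ! i1 = e1" "i1 = p \<or> Suc i1 = p" "i1 < length ces"
    using edge_index[OF P(1) in1(1) P(2)] P(3) U by blast
  obtain j1 where j1: "ces ! j1 = e1" "j1 = q \<or> Suc j1 = q" "j1 < length ces"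
    using edge_index[OF P(1) in1(1) q(1)] q(2) w by blast
  obtain i2 where i2: "ces ! i2 = e2" "i2 = p \<or> Suc i2 = p" "i2 < length ces"
    using edge_index[OF P(1) in1(2) P(2)] P(3) U e(4) by auto
  obtain j2 where j2: "ces ! j2 = e2" "j2 = q \<or> Suc j2 = q" "j2 < length ces"
    using edge_index[OF P(1) in1(2) q(1)] q(2) w e(4) by auto
  have D: "distinct ces" using P(1) unfolding is_path_def by auto
  have "i1 = j1" using D i1(1,3) j1(1,3) nth_eq_iff_index_eq by metis
  moreover have "i2 = j2" using D i2(1,3) j2(1,3) nth_eq_iff_index_eq by metis
  ultimately have "i1 = i2" using i1(2) i2(2) j1(2) j2(2) pq by arith
  then show False using i1 i2 e by simp
qed



declare upt_Suc[simp del]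

definition vH :: "nat \<Rightarrow> nat \<Rightarrow> nat" where "vH i r = prod_encode (0, prod_encode (i, r))"
definition vB :: "nat \<Rightarrow> nat" where "vB i = prod_encode (1, i)"
definition vX :: "nat \<Rightarrow> nat \<Rightarrow> nat" where "vX t j = prod_encode (2, prod_encode (t, j))"
definition eH :: "nat \<Rightarrow> nat \<Rightarrow> nat" where "eH i r = prod_encode (0, prod_encode (i, r))"
definition eP :: "nat \<Rightarrow> nat \<Rightarrow> nat" where "eP t s = prod_encode (1, prod_encode (t, s))"
definition eC :: "nat \<Rightarrow> nat \<Rightarrow> nat \<Rightarrow> nat" where "eC t j c = prod_encode (2, prod_encode (t, prod_encode (j, c)))"

lemma v_inj[simp]:
  "vH i r = vH i' r' \<longleftrightarrow> i = i' \<and> r = r'" "vB i = vB i' \<longleftrightarrow> i = i'"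
  "vX t j = vX t' j' \<longleftrightarrow> t = t' \<and> j = j'"
  "vH i r \<noteq> vB i'" "vB i' \<noteq> vH i r" "vH i r \<noteq> vX t j" "vX t j \<noteq> vH i r"
  "vB i \<noteq> vX t j" "vX t j \<noteq> vB i"
  by (auto simp: vH_def vB_def vX_def)

lemma e_inj[simp]:
  "eH i r = eH i' r' \<longleftrightarrow> i = i' \<and> r = r'" "eP t s = eP t' s' \<longleftrightarrow> t = t' \<and> s = s'"
  "eC t j c = eC t' j' c' \<longleftrightarrow> t = t' \<and> j = j' \<and> c = c'"
  "eH i r \<noteq> eP t s" "eP t s \<noteq> eH i r" "eH i r \<noteq> eC t j c" "eC t j c \<noteq> eH i r"
  "eP t s \<noteq> eC t' j c" "eC t' j c \<noteq> eP t s"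
  by (auto simp: eH_def eP_def eC_def)

lemma inj_vX: "inj (vX t)" by (auto intro: injI)

definition far :: "nat \<Rightarrow> nat \<Rightarrow> nat" where
  "far t s = (if s = 0 then (if even t then vH (t div 2) 1 else vH (t div 2) 2)
              else (if even t then vB (t div 2) else vH (Suc (t div 2)) 0))"

lemma far_not_vX[simp]: "far t s \<noteq> vX t' j" "vX t' j \<noteq> far t s"
  by (auto simp: far_def)

definition ends :: "nat \<Rightarrow> nat set" where
  "ends e = (case prod_decode e of
      (0, z) \<Rightarrow> (case prod_decode z of (i, r) \<Rightarrow> {vH i r, vH i (Suc r)})
    | (Suc 0, z) \<Rightarrow> (case prod_decode z of (t, s) \<Rightarrow> {vX t 0, far t s})
    | (_, z) \<Rightarrow> (case prod_decode z of (t, w) \<Rightarrow> (case prod_decode w of (j, c) \<Rightarrow> {vX t (j - 1), vX t j})))"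

lemma ends_simps[simp]:
  "ends (eH i r) = {vH i r, vH i (Suc r)}"
  "ends (eP t s) = {vX t 0, far t s}"
  "ends (eC t j c) = {vX t (j - 1), vX t j}"
  by (simp_all add: ends_def eH_def eP_def eC_def prod_encode_inverse numeral_2_eq_2)

definition vcase :: "(nat \<Rightarrow> nat \<Rightarrow> 'a) \<Rightarrow> (nat \<Rightarrow> 'a) \<Rightarrow> (nat \<Rightarrow> nat \<Rightarrow> 'a) \<Rightarrow> nat \<Rightarrow> 'a" where
  "vcase fH fB fX v = (case prod_decode v of
      (0, z) \<Rightarrow> (case prod_decode z of (i, r) \<Rightarrow> fH i r)
    | (Suc 0, z) \<Rightarrow> fB z
    | (_, z) \<Rightarrow> (case prod_decode z of (t, j) \<Rightarrow> fX t j))"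

lemma vcase_simps[simp]:
  "vcase fH fB fX (vH i r) = fH i r"
  "vcase fH fB fX (vB i) = fB i"
  "vcase fH fB fX (vX t j) = fX t j"
  by (simp_all add: vcase_def vH_def vB_def vX_def prod_encode_inverse numeral_2_eq_2)

lemma path_cons:
  assumes "is_path L ends vs es" "e \<in> L" "ends e = {w, hd vs}" "w \<notin> set vs" "e \<notin> set es"
  shows "is_path L ends (w # vs) (e # es)"
proof -
  have ne: "vs \<noteq> []" using assms(1) unfolding is_path_def by auto
  show ?thesis using assms unfolding is_path_def
    apply (simp add: ne hd_conv_nth)
    apply (intro allI impI)
    subgoal for i by (cases i) (auto simp: ne hd_conv_nth)
    done
qed


lemma seg_path:
  assumes "a \<le> b" "\<And>j. a < j \<Longrightarrow> j \<le> b \<Longrightarrow> sel j \<in> L \<and> (sel j = eC t j 0 \<or> sel j = eC t j 1)"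
  shows "is_path L ends (map (vX t) [a..<Suc b]) (map sel [Suc a..<Suc b])"
proof -
  note upt_Suc[simp del]
  have inj: "inj_on sel {Suc a..<Suc b}"
  proof (rule inj_onI)
    fix x y assume "x \<in> {Suc a..<Suc b}" "y \<in> {Suc a..<Suc b}" "sel x = sel y"
    then show "x = y" using assms(2)[of x] assms(2)[of y] by auto
  qed
  have len: "length (map (vX t) [a..<Suc b]) = Suc (length (map sel [Suc a..<Suc b]))"
    by (simp only: length_map length_upt) (use assms(1) in arith)
  have d1: "distinct (map (vX t) [a..<Suc b])" by (simp add: distinct_map inj_on_def)
  have d2: "distinct (map sel [Suc a..<Suc b])" using inj by (simp add: distinct_map)
  have st: "map sel [Suc a..<Suc b] ! i \<in> L \<and>
       ends (map sel [Suc a..<Suc b] ! i) = {map (vX t) [a..<Suc b] ! i, map (vX t) [a..<Suc b] ! Suc i}"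
    if "i < length (map sel [Suc a..<Suc b])" for i
  proof -
    from that have i: "Suc a + i \<le> b" by simp
    have s: "map sel [Suc a..<Suc b] ! i = sel (Suc a + i)" using i by simp
    have v1: "map (vX t) [a..<Suc b] ! i = vX t (a + i)" using i by simp
    have v2: "map (vX t) [a..<Suc b] ! Suc i = vX t (Suc a + i)" using i by simp
    have "sel (Suc a + i) \<in> L \<and> (sel (Suc a + i) = eC t (Suc a + i) 0 \<or> sel (Suc a + i) = eC t (Suc a + i) 1)"
      using assms(2)[of "Suc a + i"] i by simp
    then show ?thesis using s v1 v2 by auto
  qed
  show ?thesis unfolding is_path_def using len d1 d2 st by blast
qed

locale gad =
  fixes k l n :: nat
  assumes l2: "2 \<le> l" and kl: "l \<le> k" and n1: "1 \<le> n"
begin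

definition dbl :: "nat \<Rightarrow> bool" where "dbl j \<longleftrightarrow> j mod Suc l \<noteq> l"
definition NT :: nat where "NT = 2 * n - 1"

definition V :: "nat set" where
  "V = (\<lambda>(i, r). vH i r) ` ({..<n} \<times> {..<3}) \<union> vB ` {..<n} \<union> (\<lambda>(t, j). vX t j) ` ({..<NT} \<times> {..<k})"
definition E :: "nat set" where
  "E = (\<lambda>(i, r). eH i r) ` ({..<n} \<times> {..<2}) \<union> (\<lambda>(t, s). eP t s) ` ({..<NT} \<times> {..<2})
     \<union> (\<lambda>(t, j). eC t j 0) ` ({..<NT} \<times> {0<..<k}) \<union> (\<lambda>(t, j). eC t j 1) ` ({..<NT} \<times> {j \<in> {0<..<k}. dbl j})"
definition A :: "nat set" where "A = vB ` {i. i < n \<and> even i}"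

lemma V_mem[simp]:
  "vH i r \<in> V \<longleftrightarrow> i < n \<and> r < 3" "vB i \<in> V \<longleftrightarrow> i < n" "vX t j \<in> V \<longleftrightarrow> t < NT \<and> j < k"
  unfolding V_def by auto

lemma E_mem[simp]:
  "eH i r \<in> E \<longleftrightarrow> i < n \<and> r < 2" "eP t s \<in> E \<longleftrightarrow> t < NT \<and> s < 2"
  "eC t j c \<in> E \<longleftrightarrow> t < NT \<and> 0 < j \<and> j < k \<and> (c = 0 \<or> c = 1 \<and> dbl j)"
  unfolding E_def by auto

lemma V_cases:
  assumes "v \<in> V"
  obtains (H) i r where "v = vH i r" "i < n" "r < 3" | (B) i where "v = vB i" "i < n"
    | (X) t j where "v = vX t j" "t < NT" "j < k"
  using assms unfolding V_def by auto

lemma E_cases: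
  assumes "e \<in> E"
  obtains (H) i r where "e = eH i r" "i < n" "r < 2" | (P) t s where "e = eP t s" "t < NT" "s < 2"
    | (C0) t j where "e = eC t j 0" "t < NT" "0 < j" "j < k"
    | (C1) t j where "e = eC t j 1" "t < NT" "0 < j" "j < k" "dbl j"
  using assms unfolding E_def by auto

lemma NT_less: "t < NT \<longleftrightarrow> t < 2 * n - 1" by (simp add: NT_def)

lemma far_V: "t < NT \<Longrightarrow> s < 2 \<Longrightarrow> far t s \<in> V"
  using n1 by (auto simp: far_def NT_def elim!: oddE)

lemma k2: "2 \<le> k" using l2 kl by simp

lemma dbl_small: "0 < j \<Longrightarrow> j < l \<Longrightarrow> dbl j"
  by (simp add: dbl_def)

lemma card_ends: "e \<in> E \<Longrightarrow> card (ends e) = 2"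
proof (induction rule: E_cases)
  case (P t s) then show ?case by (auto simp: far_def)
qed auto

lemma ends_V: "e \<in> E \<Longrightarrow> ends e \<subseteq> V"
proof (induction rule: E_cases)
  case (H i r) then show ?case by auto
next
  case (P t s) then show ?case using far_V k2 by auto
qed auto

lemma multigraph: "multigraph V E ends"
  unfolding multigraph_def using card_ends ends_V by (auto simp: V_def E_def)

end


lemma hd_map_upt[simp]: "a < b \<Longrightarrow> hd (map f [a..<b]) = f a"
  by (simp add: upt_conv_Cons del: upt_Suc)

lemma mod_l_lemma:
  assumes "j mod Suc l = l" "j - l \<le> j'" "j' < j"
  shows "j' mod Suc l \<noteq> l"
proof
  assume h: "j' mod Suc l = l"
  then have "j mod Suc l = j' mod Suc l" using assms(1) by simp
  then have d: "Suc l dvd j - j'" using assms(3) by (simp add: mod_eq_dvd_iff_nat)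
  have p: "0 < j - j'" "j - j' \<le> l" using assms by auto
  have "Suc l \<le> j - j'" using dvd_imp_le[OF d p(1)] .
  then show False using p(2) by simp
qed

context gad begin
lemma dbl1: "dbl 1" using l2 by (simp add: dbl_def)
end

locale dec = gad +
  fixes F :: "nat set"
  assumes dec: "bounded_lfd V E ends k l F"
begin

lemma FE: "F \<subseteq> E" and BF: "bounded_linear_forest V F ends k" and BG: "bounded_linear_forest V (E - F) ends l"
  using dec unfolding bounded_lfd_def by auto

lemma pair_opp:
  assumes "t < NT" "0 < j" "j < k" "dbl j"
  shows "eC t j 0 \<in> F \<longleftrightarrow> eC t j 1 \<notin> F"
proof -
  have u: "vX t j \<in> V" using assms by simp
  have E: "eC t j 0 \<in> E" "eC t j 1 \<in> E" using assms by auto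
  have c: "card (ends (eC t j 0)) = 2" using card_ends E by blast
  have U: "vX t j \<in> ends (eC t j 0)" by simp
  have eq: "ends (eC t j 0) = ends (eC t j 1)" by simp
  show ?thesis
  proof
    assume "eC t j 0 \<in> F"
    then show "eC t j 1 \<notin> F" using par2[OF BF u _ _ _ eq U c] by auto
  next
    assume "eC t j 1 \<notin> F"
    then show "eC t j 0 \<in> F" using par2[OF BG u _ _ _ eq U c] E by auto
  qed
qed

lemma ports_opp:
  assumes t: "t < NT"
  shows "eP t 0 \<in> F \<longleftrightarrow> eP t 1 \<notin> F"
proof -
  have x: "vX t 0 \<in> V" using t k2 by simp
  have k1: "0 < (1::nat)" "1 < k" using k2 by auto
  have PO: "eC t 1 0 \<in> F \<longleftrightarrow> eC t 1 1 \<notin> F" using pair_opp[OF t k1 dbl1] .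
  have E: "eC t 1 0 \<in> E" "eC t 1 1 \<in> E" "eP t 0 \<in> E" "eP t 1 \<in> E" using t k1 dbl1 by auto
  have c: "card (ends (eC t 1 0)) = 2" "card (ends (eC t 1 1)) = 2" "card (ends (eP t 0)) = 2"
    "card (ends (eP t 1)) = 2" using card_ends E by blast+
  have U: "vX t 0 \<in> ends (eC t 1 0)" "vX t 0 \<in> ends (eC t 1 1)" "vX t 0 \<in> ends (eP t 0)" "vX t 0 \<in> ends (eP t 1)"
    by auto
  show ?thesis
  proof
    assume a: "eP t 0 \<in> F"
    show "eP t 1 \<notin> F"
    proof
      assume b: "eP t 1 \<in> F"
      show False
      proof (cases "eC t 1 0 \<in> F")
        case True
        show False using deg3[OF BF x a b True _ _ _ U(3) U(4) U(1) c(3) c(4) c(1)] by simp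
      next
        case False
        then have "eC t 1 1 \<in> F" using PO by simp
        then show False using deg3[OF BF x a b _ _ _ _ U(3) U(4) U(2) c(3) c(4) c(2)] by simp
      qed
    qed
  next
    assume b: "eP t 1 \<notin> F"
    show "eP t 0 \<in> F"
    proof (rule ccontr)
      assume a: "eP t 0 \<notin> F"
      have a': "eP t 0 \<in> E - F" "eP t 1 \<in> E - F" using a b E by auto
      show False
      proof (cases "eC t 1 0 \<in> F")
        case True
        then have "eC t 1 1 \<in> E - F" using PO E by simp
        then show False using deg3[OF BG x a'(1) a'(2) _ _ _ _ U(3) U(4) U(2) c(3) c(4) c(2)] by simp
      next
        case False
        then have "eC t 1 0 \<in> E - F" using E by simp
        then show False using deg3[OF BG x a'(1) a'(2) _ _ _ _ U(3) U(4) U(1) c(3) c(4) c(1)] by simp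
      qed
    qed
  qed
qed

definition fsel :: "nat \<Rightarrow> nat \<Rightarrow> nat" where
  "fsel t j = (if eC t j 0 \<in> F then eC t j 0 else eC t j 1)"
definition gsel :: "nat \<Rightarrow> nat \<Rightarrow> nat" where
  "gsel t j = (if eC t j 0 \<in> F then eC t j 1 else eC t j 0)"

lemma gsel_G:
  assumes "t < NT" "0 < j" "j < k" "dbl j"
  shows "gsel t j \<in> E - F \<and> (gsel t j = eC t j 0 \<or> gsel t j = eC t j 1)"
  using pair_opp[OF assms] assms by (auto simp: gsel_def)

lemma single_F:
  assumes t: "t < NT" and j: "0 < j" "j < k" and nd: "\<not> dbl j"
  shows "eC t j 0 \<in> F"
proof (rule ccontr)
  assume nf: "eC t j 0 \<notin> F"
  have jm: "j mod Suc l = l" using nd by (simp add: dbl_def)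
  have gj: "gsel t j = eC t j 0" using nf by (simp add: gsel_def)
  have gjG: "eC t j 0 \<in> E - F" using nf t j by simp
  show False
  proof (cases "j = l")
    case True
    have "\<exists>s'<2. eP t s' \<notin> F"
      using ports_opp[OF t] by (intro exI[of _ "if eP t 0 \<in> F then 1 else 0"]) auto
    then obtain s' where s': "s' < 2" "eP t s' \<notin> F" by blast
    have seg: "is_path (E - F) ends (map (vX t) [0..<Suc l]) (map (gsel t) [Suc 0..<Suc l])"
    proof (rule seg_path)
      show "0 \<le> l" by simp
      fix j' assume "0 < j'" "j' \<le> l"
      then show "gsel t j' \<in> E - F \<and> (gsel t j' = eC t j' 0 \<or> gsel t j' = eC t j' 1)"
        using gsel_G[OF t, of j'] dbl_small[of j'] True gj gjG j
        by (cases "j' = l") auto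
    qed
    have P: "is_path (E - F) ends (far t s' # map (vX t) [0..<Suc l]) (eP t s' # map (gsel t) [Suc 0..<Suc l])"
    proof (rule path_cons[OF seg])
      show "eP t s' \<in> E - F" using s' t by simp
      show "ends (eP t s') = {far t s', hd (map (vX t) [0..<Suc l])}" by (simp add: insert_commute del: upt_Suc)
      show "far t s' \<notin> set (map (vX t) [0..<Suc l])" by auto
      show "eP t s' \<notin> set (map (gsel t) [Suc 0..<Suc l])" by (auto simp: gsel_def)
    qed
    have "length (eP t s' # map (gsel t) [Suc 0..<Suc l]) \<le> l"
      using path_bound[OF BG P] far_V[OF t s'(1)] by simp
    then show False by simp
  next
    case False
    then have jl: "l < j" using jm by (metis mod_less_eq_dividend nat_less_le)
    define a where "a = j - Suc l"
    have seg: "is_path (E - F) ends (map (vX t) [a..<Suc j]) (map (gsel t) [Suc a..<Suc j])"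
    proof (rule seg_path)
      show "a \<le> j" by (simp add: a_def)
      fix j' assume j': "a < j'" "j' \<le> j"
      show "gsel t j' \<in> E - F \<and> (gsel t j' = eC t j' 0 \<or> gsel t j' = eC t j' 1)"
      proof (cases "j' = j")
        case True then show ?thesis using gj gjG by simp
      next
        case False
        then have "j' mod Suc l \<noteq> l" using mod_l_lemma[OF jm] j' jl by (simp add: a_def)
        then show ?thesis using gsel_G[OF t, of j'] j' False j by (simp add: dbl_def)
      qed
    qed
    have "length (map (gsel t) [Suc a..<Suc j]) \<le> l"
      using path_bound[OF BG seg] t j by (simp add: a_def)
    then show False using jl by (simp add: a_def)
  qed
qed

lemma fsel_F:
  assumes "t < NT" "0 < j" "j < k"
  shows "fsel t j \<in> F \<and> (fsel t j = eC t j 0 \<or> fsel t j = eC t j 1)"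
proof (cases "eC t j 0 \<in> F")
  case True then show ?thesis by (simp add: fsel_def)
next
  case False
  then have "dbl j" using single_F[OF assms] by blast
  then show ?thesis using pair_opp[OF assms] False by (simp add: fsel_def)
qed


lemma nodeF_path:
  assumes t: "t < NT" and s: "eP t s \<in> F"
  shows "is_path F ends (far t s # map (vX t) [0..<k]) (eP t s # map (fsel t) [1..<k])"
proof -
  have kk: "Suc (k - 1) = k" using k2 by simp
  have seg: "is_path F ends (map (vX t) [0..<Suc (k - 1)]) (map (fsel t) [Suc 0..<Suc (k - 1)])"
  proof (rule seg_path)
    fix j assume "0 < j" "j \<le> k - 1"
    then show "fsel t j \<in> F \<and> (fsel t j = eC t j 0 \<or> fsel t j = eC t j 1)"
      using fsel_F[OF t] k2 by simp
  qed simp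
  then have seg': "is_path F ends (map (vX t) [0..<k]) (map (fsel t) [1..<k])" by (simp only: kk) simp
  show ?thesis
  proof (rule path_cons[OF seg'])
    show "eP t s \<in> F" by fact
    show "ends (eP t s) = {far t s, hd (map (vX t) [0..<k])}" using k2 by (simp add: insert_commute)
    show "far t s \<notin> set (map (vX t) [0..<k])" by auto
    show "eP t s \<notin> set (map (fsel t) [1..<k])" by (auto simp: fsel_def)
  qed
qed

lemma nodeG_path:
  assumes t: "t < NT" and s: "eP t s \<notin> F" "s < 2"
  shows "is_path (E - F) ends (far t s # map (vX t) [0..<l]) (eP t s # map (gsel t) [1..<l])"
proof -
  have ll: "Suc (l - 1) = l" using l2 by simp
  have seg: "is_path (E - F) ends (map (vX t) [0..<Suc (l - 1)]) (map (gsel t) [Suc 0..<Suc (l - 1)])"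
  proof (rule seg_path)
    fix j assume "0 < j" "j \<le> l - 1"
    then show "gsel t j \<in> E - F \<and> (gsel t j = eC t j 0 \<or> gsel t j = eC t j 1)"
      using gsel_G[OF t] dbl_small[of j] kl l2 by simp
  qed simp
  then have seg': "is_path (E - F) ends (map (vX t) [0..<l]) (map (gsel t) [1..<l])" by (simp only: ll) simp
  show ?thesis
  proof (rule path_cons[OF seg'])
    show "eP t s \<in> E - F" using s t by simp
    show "ends (eP t s) = {far t s, hd (map (vX t) [0..<l])}" using l2 by (simp add: insert_commute)
    show "far t s \<notin> set (map (vX t) [0..<l])" by auto
    show "eP t s \<notin> set (map (gsel t) [1..<l])" by (auto simp: gsel_def)
  qed
qed

lemma far_end:
  assumes t: "t < NT" and s: "s < 2" and e: "e \<in> E" "e \<noteq> eP t s" "ends e = {far t s, w}"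
    and w: "w \<in> V" "w \<noteq> far t s" "\<And>j. w \<noteq> vX t j"
  shows "e \<in> F \<longleftrightarrow> eP t s \<notin> F"
proof
  assume eF: "e \<in> F"
  show "eP t s \<notin> F"
  proof
    assume pF: "eP t s \<in> F"
    have P: "is_path F ends (w # far t s # map (vX t) [0..<k]) (e # eP t s # map (fsel t) [1..<k])"
    proof (rule path_cons[OF nodeF_path[OF t pF] eF])
      show "ends e = {w, hd (far t s # map (vX t) [0..<k])}" using e(3) by (simp add: insert_commute)
      show "w \<notin> set (far t s # map (vX t) [0..<k])" using w by auto
      show "e \<notin> set (eP t s # map (fsel t) [1..<k])"
      proof
        assume "e \<in> set (eP t s # map (fsel t) [1..<k])"
        then obtain j where j: "j \<in> {1..<k}" "e = fsel t j" using e(2) by auto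
        then have "e = eC t j 0 \<or> e = eC t j 1" using fsel_F[OF t, of j] by auto
        moreover have "far t s \<in> ends e" using e(3) by simp
        ultimately show False by auto
      qed
    qed
    have "length (e # eP t s # map (fsel t) [1..<k]) \<le> k" using path_bound[OF BF P] w by simp
    then show False using k2 by simp
  qed
next
  assume pG: "eP t s \<notin> F"
  show "e \<in> F"
  proof (rule ccontr)
    assume eG: "e \<notin> F"
    have P: "is_path (E - F) ends (w # far t s # map (vX t) [0..<l]) (e # eP t s # map (gsel t) [1..<l])"
    proof (rule path_cons[OF nodeG_path[OF t pG s]])
      show "e \<in> E - F" using eG e by simp
      show "ends e = {w, hd (far t s # map (vX t) [0..<l])}" using e(3) by (simp add: insert_commute)
      show "w \<notin> set (far t s # map (vX t) [0..<l])" using w by auto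
      show "e \<notin> set (eP t s # map (gsel t) [1..<l])"
      proof
        assume "e \<in> set (eP t s # map (gsel t) [1..<l])"
        then obtain j where j: "j \<in> {1..<l}" "e = gsel t j" using e(2) by auto
        then have "e = eC t j 0 \<or> e = eC t j 1" by (auto simp: gsel_def)
        moreover have "far t s \<in> ends e" using e(3) by simp
        ultimately show False by auto
      qed
    qed
    have "length (e # eP t s # map (gsel t) [1..<l]) \<le> l" using path_bound[OF BG P] w by simp
    then show False using l2 by simp
  qed
qed

definition c :: "nat \<Rightarrow> bool" where "c i \<longleftrightarrow> eP (2 * i) 0 \<in> F"

lemma NT2: "i < n \<Longrightarrow> 2 * i < NT" "Suc i < n \<Longrightarrow> Suc (2 * i) < NT"
  by (auto simp: NT_def)

lemma hub_edges:
  assumes i: "i < n"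
  shows "(eH i 0 \<in> F \<longleftrightarrow> \<not> c i) \<and> (eH i 1 \<in> F \<longleftrightarrow> \<not> c i)"
proof -
  have t: "2 * i < NT" using NT2 i by simp
  have f: "far (2 * i) 0 = vH i 1" by (simp add: far_def)
  have a: "eH i 0 \<in> F \<longleftrightarrow> eP (2 * i) 0 \<notin> F"
    by (rule far_end[OF t, of 0 _ "vH i 0"]) (use i f in \<open>auto simp: insert_commute\<close>)
  have b: "eH i 1 \<in> F \<longleftrightarrow> eP (2 * i) 0 \<notin> F"
    by (rule far_end[OF t, of 0 _ "vH i 2"]) (use i f in \<open>auto simp: insert_commute numeral_2_eq_2\<close>)
  show ?thesis using a b by (simp add: c_def)
qed

lemma link:
  assumes i: "Suc i < n"
  shows "c (Suc i) \<longleftrightarrow> \<not> c i"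
proof -
  have t: "Suc (2 * i) < NT" using NT2 i by simp
  have f0: "far (Suc (2 * i)) 0 = vH i 2" by (simp add: far_def)
  have f1: "far (Suc (2 * i)) 1 = vH (Suc i) 0" by (simp add: far_def)
  have a: "eH i 1 \<in> F \<longleftrightarrow> eP (Suc (2 * i)) 0 \<notin> F"
    by (rule far_end[OF t, of 0 _ "vH i 1"]) (use i f0 in \<open>auto simp: insert_commute numeral_2_eq_2\<close>)
  have b: "eH (Suc i) 0 \<in> F \<longleftrightarrow> eP (Suc (2 * i)) 1 \<notin> F"
    by (rule far_end[OF t, of 1 _ "vH (Suc i) 1"]) (use i f1 in \<open>auto simp: insert_commute\<close>)
  have po: "eP (Suc (2 * i)) 0 \<in> F \<longleftrightarrow> eP (Suc (2 * i)) 1 \<notin> F" using ports_opp[OF t] .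
  show ?thesis using a b po hub_edges[of i] hub_edges[of "Suc i"] i by auto
qed

lemma c_even: "2 * j < n \<Longrightarrow> c (2 * j) \<longleftrightarrow> c 0"
proof (induction j)
  case 0 then show ?case by simp
next
  case (Suc j)
  have "c (Suc (Suc (2 * j))) \<longleftrightarrow> \<not> c (Suc (2 * j))" using link[of "Suc (2 * j)"] Suc.prems by simp
  also have "\<dots> \<longleftrightarrow> c (2 * j)" using link[of "2 * j"] Suc.prems by simp
  finally show ?case using Suc by simp
qed

lemma coverage:
  "(\<not> c 0 \<longrightarrow> covered A k F ends) \<and> (c 0 \<longrightarrow> covered A l (E - F) ends)"
proof (intro conjI impI)
  have tp: "eP (2 * i) 1 \<in> F \<longleftrightarrow> \<not> c 0" if "i < n" "even i" for i
    using ports_opp[OF NT2(1)[OF that(1)]] c_even[of "i div 2"] that by (auto simp: c_def)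
  have fB: "far (2 * i) 1 = vB i" for i by (simp add: far_def)
  {
    assume nc: "\<not> c 0"
    show "covered A k F ends" unfolding covered_def A_def
    proof
      fix a assume "a \<in> vB ` {i. i < n \<and> even i}"
      then obtain i where i: "a = vB i" "i < n" "even i" by auto
      have pf: "eP (2 * i) 1 \<in> F" using tp[OF i(2,3)] nc by simp
      show "\<exists>vs es. is_path F ends vs es \<and> length es = k \<and> (hd vs = a \<or> last vs = a)"
        using nodeF_path[OF NT2(1)[OF i(2)] pf] fB[of i] i(1) k2 by (intro exI conjI) auto
    qed
  }
  {
    assume cc: "c 0"
    show "covered A l (E - F) ends" unfolding covered_def A_def
    proof
      fix a assume "a \<in> vB ` {i. i < n \<and> even i}"
      then obtain i where i: "a = vB i" "i < n" "even i" by auto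
      have pf: "eP (2 * i) 1 \<notin> F" using tp[OF i(2,3)] cc by simp
      show "\<exists>vs es. is_path (E - F) ends vs es \<and> length es = l \<and> (hd vs = a \<or> last vs = a)"
        using nodeG_path[OF NT2(1)[OF i(2)] pf] fB[of i] i(1) l2 by (intro exI conjI) auto
    qed
  }
qed

end


lemma path_sing: "is_path L ends [v] []" by (simp add: is_path_def)

lemma ar_div:
  assumes "1 \<le> m" "m * Suc l - 1 \<le> j'" "j' < m * Suc l + l"
  shows "Suc j' div Suc l = m"
proof (rule div_nat_eqI)
  have "1 \<le> m * Suc l" using assms(1) by simp
  then show "Suc l * m \<le> Suc j'" using assms(2) by (simp add: mult.commute)
  show "Suc j' < Suc l * Suc m" using assms(3) by (simp add: algebra_simps)
qed

lemma ar_vertex: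
  assumes "l \<le> j"
  shows "1 \<le> Suc j div Suc l \<and> Suc j div Suc l * Suc l - 1 \<le> j \<and> j < Suc j div Suc l * Suc l + l"
proof -
  define m where "m = Suc j div Suc l"
  have d: "Suc j = m * Suc l + Suc j mod Suc l" by (simp only: m_def div_mult_mod_eq)
  have r: "Suc j mod Suc l < Suc l" by simp
  have "1 \<le> m" unfolding m_def using assms by (simp add: div_greater_zero_iff Suc_le_eq del: div_Suc)
  moreover have "m * Suc l - 1 \<le> j" using d by linarith
  moreover have "j < m * Suc l + l" using d r by linarith
  ultimately show ?thesis by (simp add: m_def)
qed

lemma ar_edge:
  assumes "j mod Suc l \<noteq> l" "l \<le> j"
  shows "1 \<le> Suc j div Suc l \<and> Suc j div Suc l * Suc l \<le> j \<and> j < Suc j div Suc l * Suc l + l"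
proof -
  define m where "m = j div Suc l"
  define r where "r = j mod Suc l"
  have d: "j = m * Suc l + r" by (simp only: m_def r_def div_mult_mod_eq)
  have r: "r < l" using assms(1) unfolding r_def using mod_less_divisor[of "Suc l" j] by linarith
  have "Suc j div Suc l = m"
    by (rule div_nat_eqI) (use d r in \<open>auto simp: algebra_simps\<close>)
  moreover have "1 \<le> m"
  proof (rule ccontr)
    assume "\<not> 1 \<le> m" then have "m = 0" by simp
    then show False using d r assms(2) by simp
  qed
  ultimately show ?thesis using d r by simp
qed

context gad begin

lemma node_path_gen:
  assumes "eP t s \<in> L" "0 < B" "\<And>j. 0 < j \<Longrightarrow> j < B \<Longrightarrow> sel j \<in> L \<and> (sel j = eC t j 0 \<or> sel j = eC t j 1)"
  shows "is_path L ends (far t s # map (vX t) [0..<B]) (eP t s # map sel [1..<B])"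
proof -
  have kk: "Suc (B - 1) = B" using assms(2) by simp
  have seg: "is_path L ends (map (vX t) [0..<Suc (B - 1)]) (map sel [Suc 0..<Suc (B - 1)])"
  proof (rule seg_path)
    fix j assume "0 < j" "j \<le> B - 1"
    then show "sel j \<in> L \<and> (sel j = eC t j 0 \<or> sel j = eC t j 1)" using assms(3) by simp
  qed simp
  then have seg': "is_path L ends (map (vX t) [0..<B]) (map sel [1..<B])" by (simp only: kk) simp
  show ?thesis
  proof (rule path_cons[OF seg'])
    show "eP t s \<in> L" by fact
    show "ends (eP t s) = {far t s, hd (map (vX t) [0..<B])}" using assms(2) by (simp add: insert_commute)
    show "far t s \<notin> set (map (vX t) [0..<B])" by auto
    show "eP t s \<notin> set (map sel [1..<B])"
    proof
      assume "eP t s \<in> set (map sel [1..<B])"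
      then obtain j where "j \<in> {1..<B}" "eP t s = sel j" by auto
      then show False using assms(3)[of j] by auto
    qed
  qed
qed

lemma HP_path: "eH i 0 \<in> L \<Longrightarrow> eH i 1 \<in> L \<Longrightarrow> is_path L ends [vH i 0, vH i 1, vH i 2] [eH i 0, eH i 1]"
  unfolding is_path_def by (auto simp: less_Suc_eq numeral_2_eq_2)

definition cc :: "bool \<Rightarrow> nat \<Rightarrow> bool" where "cc q i \<longleftrightarrow> (q \<longleftrightarrow> even i)"
definition sF :: "bool \<Rightarrow> nat \<Rightarrow> nat" where "sF q t = (if cc q (t div 2) then 0 else 1)"

definition FQ :: "bool \<Rightarrow> nat set" where
  "FQ q = (\<lambda>(i, r). eH i r) ` {(i, r). i < n \<and> r < 2 \<and> \<not> cc q i} \<union> (\<lambda>t. eP t (sF q t)) ` {..<NT}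
     \<union> (\<lambda>(t, j). eC t j 0) ` ({..<NT} \<times> {0<..<k})"

lemma FQ_mem[simp]:
  "eH i r \<in> FQ q \<longleftrightarrow> i < n \<and> r < 2 \<and> \<not> cc q i"
  "eP t s \<in> FQ q \<longleftrightarrow> t < NT \<and> s = sF q t"
  "eC t j c \<in> FQ q \<longleftrightarrow> t < NT \<and> 0 < j \<and> j < k \<and> c = 0"
  unfolding FQ_def by auto

lemma FQ_cases:
  assumes "e \<in> FQ q"
  obtains (H) i r where "e = eH i r" "i < n" "r < 2" "\<not> cc q i" | (P) t where "e = eP t (sF q t)" "t < NT"
    | (C0) t j where "e = eC t j 0" "t < NT" "0 < j" "j < k"
  using assms unfolding FQ_def by auto

lemma sF_less: "sF q t < 2" by (simp add: sF_def)

lemma FQ_E: "FQ q \<subseteq> E"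
  by (auto elim!: FQ_cases simp: sF_less)

lemma cc_Suc: "cc q (Suc i) \<longleftrightarrow> \<not> cc q i" by (simp add: cc_def)

definition NPF :: "bool \<Rightarrow> nat \<Rightarrow> nat list \<times> nat list" where
  "NPF q t = (far t (sF q t) # map (vX t) [0..<k], eP t (sF q t) # map (\<lambda>j. eC t j 0) [1..<k])"
definition HP :: "nat \<Rightarrow> nat list \<times> nat list" where
  "HP i = ([vH i 0, vH i 1, vH i 2], [eH i 0, eH i 1])"

definition compF :: "bool \<Rightarrow> nat \<Rightarrow> nat list \<times> nat list" where
  "compF q = vcase
     (\<lambda>i r. if \<not> cc q i then HP i else if r = 1 then NPF q (2 * i)
            else if r = 2 then (if Suc i < n then NPF q (Suc (2 * i)) else ([vH i r], []))
            else (if 0 < i then NPF q (2 * i - 1) else ([vH i r], [])))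
     (\<lambda>i. if \<not> cc q i then NPF q (2 * i) else ([vB i], []))
     (\<lambda>t j. NPF q t)"

definition goodF :: "bool \<Rightarrow> nat list \<times> nat list \<Rightarrow> bool" where
  "goodF q P \<longleftrightarrow> is_path (FQ q) ends (fst P) (snd P) \<and> length (snd P) \<le> k \<and>
     (\<forall>u\<in>set (fst P). u \<in> V \<and> compF q u = P)"

lemma compF_far: "t < NT \<Longrightarrow> compF q (far t (sF q t)) = NPF q t"
  apply (cases "even t")
  subgoal by (auto simp: compF_def far_def sF_def elim!: evenE)
  subgoal by (auto simp: compF_def far_def sF_def cc_Suc NT_def elim!: oddE)
  done

lemma goodF_NPF: "t < NT \<Longrightarrow> goodF q (NPF q t)"
  unfolding goodF_def
proof (intro conjI)
  assume t: "t < NT"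
  show "is_path (FQ q) ends (fst (NPF q t)) (snd (NPF q t))"
    unfolding NPF_def fst_conv snd_conv
    by (rule node_path_gen) (use t k2 in auto)
  show "length (snd (NPF q t)) \<le> k" using k2 by (simp add: NPF_def)
  show "\<forall>u\<in>set (fst (NPF q t)). u \<in> V \<and> compF q u = NPF q t"
    using t compF_far[OF t] far_V[OF t sF_less] by (auto simp: NPF_def compF_def)
qed

lemma goodF_HP: "i < n \<Longrightarrow> \<not> cc q i \<Longrightarrow> goodF q (HP i)"
  unfolding goodF_def HP_def using HP_path[of i "FQ q"] k2
  by (auto simp: compF_def HP_def)

lemma goodF_sing: "v \<in> V \<Longrightarrow> compF q v = ([v], []) \<Longrightarrow> goodF q ([v], [])"
  unfolding goodF_def by (simp add: path_sing)

lemma goodF_use: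
  assumes "compF q v = P" "goodF q P" "v \<in> set (fst P)"
  shows "goodF q (compF q v) \<and> v \<in> set (fst (compF q v))"
  using assms by simp

lemma NPF_far: "far t (sF q t) \<in> set (fst (NPF q t))" by (simp add: NPF_def)

lemma goodF_all:
  assumes "v \<in> V"
  shows "goodF q (compF q v) \<and> v \<in> set (fst (compF q v))"
  using assms
proof (cases rule: V_cases)
  case (H i r)
  show ?thesis
  proof (cases "cc q i")
    case False then show ?thesis using H goodF_HP[OF H(2) False] by (auto simp: compF_def HP_def)
  next
    case True
    have "r = 0 \<or> r = 1 \<or> r = 2" using H(3) by auto
    then show ?thesis
    proof (elim disjE)
      assume r: "r = 0"
      show ?thesis
      proof (cases "0 < i")
        case True
        have t: "2 * i - 1 < NT" using H(2) True by (simp add: NT_def)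
        have f: "far (2 * i - 1) (sF q (2 * i - 1)) = vH i 0" using True \<open>cc q i\<close>
          by (cases i) (auto simp: far_def sF_def cc_Suc)
        show ?thesis
          by (rule goodF_use[OF _ goodF_NPF[OF t]]) (use H r True \<open>cc q i\<close> f NPF_far[of "2 * i - 1" q] in \<open>simp_all add: compF_def\<close>)
      next
        case False then show ?thesis using goodF_sing[of v q] H r \<open>cc q i\<close> by (simp add: compF_def)
      qed
    next
      assume r: "r = 1"
      have t: "2 * i < NT" using H(2) by (simp add: NT_def)
      have f: "far (2 * i) (sF q (2 * i)) = vH i 1" using \<open>cc q i\<close> by (simp add: far_def sF_def)
      show ?thesis
        by (rule goodF_use[OF _ goodF_NPF[OF t]]) (use H r \<open>cc q i\<close> f NPF_far[of "2 * i" q] in \<open>simp_all add: compF_def\<close>)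
    next
      assume r: "r = 2"
      show ?thesis
      proof (cases "Suc i < n")
        case True
        have t: "Suc (2 * i) < NT" using True by (simp add: NT_def)
        have f: "far (Suc (2 * i)) (sF q (Suc (2 * i))) = vH i 2" using \<open>cc q i\<close> by (simp add: far_def sF_def)
        show ?thesis
          by (rule goodF_use[OF _ goodF_NPF[OF t]]) (use H r True \<open>cc q i\<close> f NPF_far[of "Suc (2 * i)" q] in \<open>simp_all add: compF_def\<close>)
      next
        case False then show ?thesis using goodF_sing[of v q] H r \<open>cc q i\<close> by (simp add: compF_def)
      qed
    qed
  qed
next
  case (B i)
  show ?thesis
  proof (cases "cc q i")
    case False
    have t: "2 * i < NT" using B(2) by (simp add: NT_def)
    have f: "far (2 * i) (sF q (2 * i)) = vB i" using False by (simp add: far_def sF_def)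
    show ?thesis
      by (rule goodF_use[OF _ goodF_NPF[OF t]]) (use B False f NPF_far[of "2 * i" q] in \<open>simp_all add: compF_def\<close>)
  next
    case True then show ?thesis using goodF_sing[of v q] B by (simp add: compF_def)
  qed
next
  case (X t j)
  show ?thesis
    by (rule goodF_use[OF _ goodF_NPF[OF X(2)]]) (use X in \<open>auto simp: compF_def NPF_def\<close>)
qed

lemma BLF_F: "bounded_linear_forest V (FQ q) ends k"
proof (rule blf_from_comps[where cv = "\<lambda>v. fst (compF q v)" and ce = "\<lambda>v. snd (compF q v)"])
  fix v assume v: "v \<in> V"
  then show "is_path (FQ q) ends (fst (compF q v)) (snd (compF q v)) \<and> v \<in> set (fst (compF q v)) \<and>
    length (snd (compF q v)) \<le> k" using goodF_all[OF v] unfolding goodF_def by blast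
next
  fix v u assume v: "v \<in> V" and u: "u \<in> set (fst (compF q v))"
  have "u \<in> V \<and> compF q u = compF q v"
    using goodF_all[OF v] u unfolding goodF_def by blast
  then show "u \<in> V \<and> fst (compF q u) = fst (compF q v) \<and> snd (compF q u) = snd (compF q v)"
    by simp
next
  fix e assume "e \<in> FQ q"
  then show "\<exists>v\<in>V. e \<in> set (snd (compF q v))"
  proof (cases rule: FQ_cases)
    case (H i r)
    then show ?thesis by (intro bexI[of _ "vH i 0"]) (auto simp: compF_def HP_def less_2_cases_iff)
  next
    case (P t)
    then show ?thesis using k2 by (intro bexI[of _ "vX t 0"]) (auto simp: compF_def NPF_def)
  next
    case (C0 t j)
    then show ?thesis using k2 by (intro bexI[of _ "vX t 0"]) (auto simp: compF_def NPF_def)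
  qed
qed


definition sG :: "bool \<Rightarrow> nat \<Rightarrow> nat" where "sG q t = 1 - sF q t"

lemma GQ_mem[simp]:
  "eH i r \<in> E - FQ q \<longleftrightarrow> i < n \<and> r < 2 \<and> cc q i"
  "eP t s \<in> E - FQ q \<longleftrightarrow> t < NT \<and> s = sG q t"
  "eC t j c \<in> E - FQ q \<longleftrightarrow> t < NT \<and> 0 < j \<and> j < k \<and> c = 1 \<and> dbl j"
  by (auto simp: sG_def sF_def)

lemma GQ_cases:
  assumes "e \<in> E - FQ q"
  obtains (H) i r where "e = eH i r" "i < n" "r < 2" "cc q i" | (P) t where "e = eP t (sG q t)" "t < NT"
    | (C1) t j where "e = eC t j 1" "t < NT" "0 < j" "j < k" "dbl j"
proof -
  have "e \<in> E" using assms by simp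
  then show ?thesis
  proof (cases rule: E_cases)
    case (H i r) then show ?thesis using that assms by auto
  next
    case (P t s) then show ?thesis using that assms by (auto simp: sG_def sF_def split: if_splits)
  next
    case (C0 t j) then show ?thesis using assms by auto
  next
    case (C1 t j) then show ?thesis using that assms by auto
  qed
qed

lemma sG_less: "sG q t < 2" by (simp add: sG_def)

definition NR0 :: "bool \<Rightarrow> nat \<Rightarrow> nat list \<times> nat list" where
  "NR0 q t = (far t (sG q t) # map (vX t) [0..<l], eP t (sG q t) # map (\<lambda>j. eC t j 1) [1..<l])"
definition NR :: "nat \<Rightarrow> nat \<Rightarrow> nat list \<times> nat list" where
  "NR t m = (map (vX t) [m * Suc l - 1..<min (m * Suc l + l) k], map (\<lambda>j. eC t j 1) [m * Suc l..<min (m * Suc l + l) k])"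

definition compG :: "bool \<Rightarrow> nat \<Rightarrow> nat list \<times> nat list" where
  "compG q = vcase
     (\<lambda>i r. if cc q i then HP i else if r = 1 then NR0 q (2 * i)
            else if r = 2 then (if Suc i < n then NR0 q (Suc (2 * i)) else ([vH i r], []))
            else (if 0 < i then NR0 q (2 * i - 1) else ([vH i r], [])))
     (\<lambda>i. if cc q i then NR0 q (2 * i) else ([vB i], []))
     (\<lambda>t j. if j < l then NR0 q t else NR t (Suc j div Suc l))"

definition goodG :: "bool \<Rightarrow> nat list \<times> nat list \<Rightarrow> bool" where
  "goodG q P \<longleftrightarrow> is_path (E - FQ q) ends (fst P) (snd P) \<and> length (snd P) \<le> l \<and>
     (\<forall>u\<in>set (fst P). u \<in> V \<and> compG q u = P)"

lemma compG_far: "t < NT \<Longrightarrow> compG q (far t (sG q t)) = NR0 q t"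
  apply (cases "even t")
  subgoal by (auto simp: compG_def far_def sF_def sG_def elim!: evenE)
  subgoal by (auto simp: compG_def far_def sF_def sG_def cc_Suc NT_def elim!: oddE)
  done

lemma goodG_NR0: "t < NT \<Longrightarrow> goodG q (NR0 q t)"
  unfolding goodG_def
proof (intro conjI)
  assume t: "t < NT"
  show "is_path (E - FQ q) ends (fst (NR0 q t)) (snd (NR0 q t))"
    unfolding NR0_def fst_conv snd_conv
    by (rule node_path_gen) (use t l2 kl dbl_small in \<open>auto simp: sG_def sF_def\<close>)
  show "length (snd (NR0 q t)) \<le> l" using l2 by (simp add: NR0_def)
  show "\<forall>u\<in>set (fst (NR0 q t)). u \<in> V \<and> compG q u = NR0 q t"
    using t compG_far[OF t] far_V[OF t sG_less] kl by (auto simp: NR0_def compG_def)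
qed

lemma mod_off: "d < l \<Longrightarrow> (m * Suc l + d) mod Suc l = d"
  by (metis add.commute mod_mult_self1 mod_less less_SucI)

lemma goodG_NR:
  assumes t: "t < NT" and m: "1 \<le> m" "m * Suc l - 1 < k"
  shows "goodG q (NR t m)"
proof -
  define a where "a = m * Suc l - 1"
  define b where "b = min (m * Suc l + l) k - 1"
  have m1: "1 \<le> m * Suc l" using m(1) by simp
  have sb: "Suc b = min (m * Suc l + l) k" using m1 k2 unfolding b_def by linarith
  have sa: "Suc a = m * Suc l" using m1 unfolding a_def by linarith
  have e1: "[m * Suc l - 1..<min (m * Suc l + l) k] = [a..<Suc b]" using sb by (simp add: a_def)
  have e2: "[m * Suc l..<min (m * Suc l + l) k] = [Suc a..<Suc b]" using sb sa by simp
  have P: "is_path (E - FQ q) ends (map (vX t) [a..<Suc b]) (map (\<lambda>j. eC t j 1) [Suc a..<Suc b])"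
  proof (rule seg_path)
    show "a \<le> b" using m m1 by (simp add: a_def b_def)
    fix j assume j: "a < j" "j \<le> b"
    then have j': "m * Suc l \<le> j" "j < m * Suc l + l" "j < k" using m1 by (auto simp: a_def b_def)
    then obtain d where d: "j = m * Suc l + d" "d < l" by (metis add_less_cancel_left le_iff_add)
    then have "dbl j" using mod_off[of d m] by (simp add: dbl_def)
    then show "eC t j 1 \<in> E - FQ q \<and> (eC t j 1 = eC t j 0 \<or> eC t j 1 = eC t j 1)"
      using t j' m1 by simp
  qed
  show ?thesis unfolding goodG_def
  proof (intro conjI)
    show "is_path (E - FQ q) ends (fst (NR t m)) (snd (NR t m))" unfolding NR_def fst_conv snd_conv e1 e2 using P .
    show "length (snd (NR t m)) \<le> l" by (simp add: NR_def)
    show "\<forall>u\<in>set (fst (NR t m)). u \<in> V \<and> compG q u = NR t m"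
    proof
      fix u assume "u \<in> set (fst (NR t m))"
      then obtain j where j: "u = vX t j" "m * Suc l - 1 \<le> j" "j < min (m * Suc l + l) k" by (auto simp: NR_def)
      have "l \<le> m * Suc l - 1" using m(1) by (cases m) auto
      then have "\<not> j < l" using j by simp
      moreover have "Suc j div Suc l = m" using ar_div[OF m(1) j(2)] j(3) by simp
      ultimately show "u \<in> V \<and> compG q u = NR t m" using j t by (simp add: compG_def)
    qed
  qed
qed

lemma goodG_HP: "i < n \<Longrightarrow> cc q i \<Longrightarrow> goodG q (HP i)"
  unfolding goodG_def HP_def using HP_path[of i "E - FQ q"] l2
  by (auto simp: compG_def HP_def)

lemma goodG_sing: "v \<in> V \<Longrightarrow> compG q v = ([v], []) \<Longrightarrow> goodG q ([v], [])"
  unfolding goodG_def by (simp add: path_sing)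

lemma goodG_use:
  assumes "compG q v = P" "goodG q P" "v \<in> set (fst P)"
  shows "goodG q (compG q v) \<and> v \<in> set (fst (compG q v))"
  using assms by simp

lemma NR0_far: "far t (sG q t) \<in> set (fst (NR0 q t))" by (simp add: NR0_def)

lemma goodG_all:
  assumes "v \<in> V"
  shows "goodG q (compG q v) \<and> v \<in> set (fst (compG q v))"
  using assms
proof (cases rule: V_cases)
  case (H i r)
  show ?thesis
  proof (cases "cc q i")
    case True then show ?thesis using H goodG_HP[OF H(2) True] by (auto simp: compG_def HP_def)
  next
    case False
    have "r = 0 \<or> r = 1 \<or> r = 2" using H(3) by auto
    then show ?thesis
    proof (elim disjE)
      assume r: "r = 0"
      show ?thesis
      proof (cases "0 < i")
        case True
        have t: "2 * i - 1 < NT" using H(2) True by (simp add: NT_def)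
        have f: "far (2 * i - 1) (sG q (2 * i - 1)) = vH i 0" using True \<open>\<not> cc q i\<close>
          by (cases i) (auto simp: far_def sF_def sG_def cc_Suc)
        show ?thesis
          by (rule goodG_use[OF _ goodG_NR0[OF t]]) (use H r True \<open>\<not> cc q i\<close> f NR0_far[of "2 * i - 1" q] in \<open>simp_all add: compG_def\<close>)
      next
        case False then show ?thesis using goodG_sing[of v q] H r \<open>\<not> cc q i\<close> by (simp add: compG_def)
      qed
    next
      assume r: "r = 1"
      have t: "2 * i < NT" using H(2) by (simp add: NT_def)
      have f: "far (2 * i) (sG q (2 * i)) = vH i 1" using \<open>\<not> cc q i\<close> by (simp add: far_def sF_def sG_def)
      show ?thesis
        by (rule goodG_use[OF _ goodG_NR0[OF t]]) (use H r \<open>\<not> cc q i\<close> f NR0_far[of "2 * i" q] in \<open>simp_all add: compG_def\<close>)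
    next
      assume r: "r = 2"
      show ?thesis
      proof (cases "Suc i < n")
        case True
        have t: "Suc (2 * i) < NT" using True by (simp add: NT_def)
        have f: "far (Suc (2 * i)) (sG q (Suc (2 * i))) = vH i 2" using \<open>\<not> cc q i\<close> by (simp add: far_def sF_def sG_def)
        show ?thesis
          by (rule goodG_use[OF _ goodG_NR0[OF t]]) (use H r True \<open>\<not> cc q i\<close> f NR0_far[of "Suc (2 * i)" q] in \<open>simp_all add: compG_def\<close>)
      next
        case False then show ?thesis using goodG_sing[of v q] H r \<open>\<not> cc q i\<close> by (simp add: compG_def)
      qed
    qed
  qed
next
  case (B i)
  show ?thesis
  proof (cases "cc q i")
    case True
    have t: "2 * i < NT" using B(2) by (simp add: NT_def)
    have f: "far (2 * i) (sG q (2 * i)) = vB i" using True by (simp add: far_def sF_def sG_def)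
    show ?thesis
      by (rule goodG_use[OF _ goodG_NR0[OF t]]) (use B True f NR0_far[of "2 * i" q] in \<open>simp_all add: compG_def\<close>)
  next
    case False then show ?thesis using goodG_sing[of v q] B by (simp add: compG_def)
  qed
next
  case (X t j)
  show ?thesis
  proof (cases "j < l")
    case True
    show ?thesis
      by (rule goodG_use[OF _ goodG_NR0[OF X(2)]]) (use X True in \<open>auto simp: compG_def NR0_def\<close>)
  next
    case False
    define m where "m = Suc j div Suc l"
    have a: "1 \<le> m" "m * Suc l - 1 \<le> j" "j < m * Suc l + l" using ar_vertex[where l=l and j=j] False by (auto simp: m_def)
    have g: "goodG q (NR t m)" using goodG_NR[OF X(2) a(1)] a(2) X(3) by simp
    show ?thesis
      by (rule goodG_use[OF _ g]) (use X False a in \<open>auto simp: compG_def NR_def m_def\<close>)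
  qed
qed

lemma BLF_G: "bounded_linear_forest V (E - FQ q) ends l"
proof (rule blf_from_comps[where cv = "\<lambda>v. fst (compG q v)" and ce = "\<lambda>v. snd (compG q v)"])
  fix v assume v: "v \<in> V"
  then show "is_path (E - FQ q) ends (fst (compG q v)) (snd (compG q v)) \<and> v \<in> set (fst (compG q v)) \<and>
    length (snd (compG q v)) \<le> l" using goodG_all[OF v] unfolding goodG_def by blast
next
  fix v u assume v: "v \<in> V" and u: "u \<in> set (fst (compG q v))"
  have "u \<in> V \<and> compG q u = compG q v"
    using goodG_all[OF v] u unfolding goodG_def by blast
  then show "u \<in> V \<and> fst (compG q u) = fst (compG q v) \<and> snd (compG q u) = snd (compG q v)"
    by simp
next
  fix e assume "e \<in> E - FQ q"
  then show "\<exists>v\<in>V. e \<in> set (snd (compG q v))"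
  proof (cases rule: GQ_cases)
    case (H i r)
    then show ?thesis by (intro bexI[of _ "vH i 0"]) (auto simp: compG_def HP_def less_2_cases_iff)
  next
    case (P t)
    then show ?thesis using k2 l2 by (intro bexI[of _ "vX t 0"]) (auto simp: compG_def NR0_def)
  next
    case (C1 t j)
    show ?thesis
    proof (cases "j < l")
      case True
      then show ?thesis using C1 k2 l2 by (intro bexI[of _ "vX t 0"]) (auto simp: compG_def NR0_def)
    next
      case False
      have a: "Suc j div Suc l * Suc l \<le> j" "j < Suc j div Suc l * Suc l + l"
        using ar_edge[where l=l and j=j] False C1(5) by (auto simp: dbl_def)
      show ?thesis using C1 False a by (intro bexI[of _ "vX t j"]) (auto simp: compG_def NR_def)
    qed
  qed
qed


lemma FQ_lfd: "bounded_lfd V E ends k l (FQ q)"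
  unfolding bounded_lfd_def using FQ_E BLF_F BLF_G by blast

lemma deg_B: "i < n \<Longrightarrow> degree E ends (vB i) = 1"
proof -
  assume i: "i < n"
  have "{e \<in> E. vB i \<in> ends e} = {eP (2 * i) 1}"
  proof
    show "{e \<in> E. vB i \<in> ends e} \<subseteq> {eP (2 * i) 1}"
    proof
      fix e assume e: "e \<in> {e \<in> E. vB i \<in> ends e}"
      then have "e \<in> E" by simp
      then show "e \<in> {eP (2 * i) 1}"
      proof (cases rule: E_cases)
        case (P t s) then show ?thesis using e by (auto simp: far_def split: if_splits elim!: evenE)
      qed (use e in auto)
    qed
    show "{eP (2 * i) 1} \<subseteq> {e \<in> E. vB i \<in> ends e}" using i by (auto simp: far_def NT_def)
  qed
  then show ?thesis by (simp add: degree_def)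
qed

lemma A_V: "A \<subseteq> V" unfolding A_def by auto

lemma gadget_main: "gadget V E ends A (card A) k l"
  unfolding gadget_def
proof (intro conjI)
  show "multigraph V E ends" by (rule multigraph)
  show "A \<subseteq> V" by (rule A_V)
  show "\<forall>a\<in>A. degree E ends a = 1" using deg_B by (auto simp: A_def)
  show "card A = card A" ..
  show "\<exists>F. bounded_lfd V E ends k l F \<and> covered A k F ends"
  proof (intro exI conjI)
    interpret d: dec k l n "FQ False" by unfold_locales (rule FQ_lfd)
    show "bounded_lfd V E ends k l (FQ False)" by (rule FQ_lfd)
    have "\<not> d.c 0" using n1 by (simp add: d.c_def NT_def sF_def cc_def)
    then show "covered A k (FQ False) ends" using d.coverage by blast
  qed
  show "\<exists>F. bounded_lfd V E ends k l F \<and> covered A l (E - F) ends"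
  proof (intro exI conjI)
    interpret d: dec k l n "FQ True" by unfold_locales (rule FQ_lfd)
    show "bounded_lfd V E ends k l (FQ True)" by (rule FQ_lfd)
    have "d.c 0" using n1 by (simp add: d.c_def NT_def sF_def cc_def)
    then show "covered A l (E - FQ True) ends" using d.coverage by blast
  qed
  show "\<forall>F. bounded_lfd V E ends k l F \<longrightarrow> covered A k F ends \<or> covered A l (E - F) ends"
  proof (intro allI impI)
    fix F assume "bounded_lfd V E ends k l F"
    then interpret d: dec k l n F by unfold_locales
    show "covered A k F ends \<or> covered A l (E - F) ends" using d.coverage by blast
  qed
qed

lemma card_V: "card V \<le> 4 * n + 2 * n * k"
proof -
  have "card V \<le> card ((\<lambda>(i, r). vH i r) ` ({..<n} \<times> {..<3})) + card (vB ` {..<n}) + card ((\<lambda>(t, j). vX t j) ` ({..<NT} \<times> {..<k}))"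
    unfolding V_def by (meson card_Un_le add_le_mono order_trans le_refl)
  also have "\<dots> \<le> card ({..<n} \<times> {..<3::nat}) + card {..<n} + card ({..<NT} \<times> {..<k})"
    by (intro add_le_mono card_image_le) auto
  also have "\<dots> = 3 * n + n + NT * k" by simp
  also have "\<dots> \<le> 4 * n + 2 * n * k" by (simp add: NT_def)
  finally show ?thesis .
qed

lemma card_E: "card E \<le> 6 * n + 4 * n * k"
proof -
  have "card E \<le> card ((\<lambda>(i, r). eH i r) ` ({..<n} \<times> {..<2})) + card ((\<lambda>(t, s). eP t s) ` ({..<NT} \<times> {..<2}))
     + card ((\<lambda>(t, j). eC t j 0) ` ({..<NT} \<times> {0<..<k})) + card ((\<lambda>(t, j). eC t j 1) ` ({..<NT} \<times> {j \<in> {0<..<k}. dbl j}))"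
    unfolding E_def by (meson card_Un_le add_le_mono order_trans le_refl)
  also have "\<dots> \<le> card ({..<n} \<times> {..<2::nat}) + card ({..<NT} \<times> {..<2::nat}) + card ({..<NT} \<times> {0<..<k})
      + card ({..<NT} \<times> {j \<in> {0<..<k}. dbl j})"
    by (intro add_le_mono card_image_le) auto
  also have "\<dots> \<le> 2 * n + 2 * NT + NT * k + NT * k"
  proof -
    have "card {j \<in> {0<..<k}. dbl j} \<le> card {0<..<k}" by (rule card_mono) auto
    then have "card {j \<in> {0<..<k}. dbl j} \<le> k" by simp
    then have h1: "card ({..<NT} \<times> {j \<in> {0<..<k}. dbl j}) \<le> NT * k" by (simp add: card_cartesian_product)
    have h2: "card ({..<NT} \<times> {0<..<k}) \<le> NT * k" by (simp add: card_cartesian_product)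
    have h3: "card ({..<n} \<times> {..<2::nat}) = 2 * n" "card ({..<NT} \<times> {..<2::nat}) = 2 * NT"
      by (simp_all add: card_cartesian_product)
    show ?thesis using h1 h2 h3 by linarith
  qed
  also have "\<dots> \<le> 6 * n + 4 * n * k"
  proof -
    have "NT \<le> 2 * n" by (simp add: NT_def)
    then have "NT * k \<le> 2 * n * k" by simp
    then show ?thesis using \<open>NT \<le> 2 * n\<close> by linarith
  qed
  finally show ?thesis .
qed

end


lemma card_evens: "card {i. i < 2 * a - 1 \<and> even i} = (a::nat)"
proof -
  have "{i. i < 2 * a - 1 \<and> even i} = (\<lambda>j. 2 * j) ` {..<a}"
    by (auto elim!: evenE)
  then show ?thesis by (simp add: card_image inj_on_def)
qed

lemma lemma16_aux:
  fixes k l \<alpha> :: nat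
  assumes "l \<ge> 2" and "k \<ge> l" and a: "\<alpha> \<ge> 2"
  shows "\<exists>(V::nat set) (E::nat set) (ends::nat \<Rightarrow> nat set) A.
              gadget V E ends A \<alpha> k l \<and> card V + card E \<le> (20 + 12 * k) * \<alpha>"
proof -
  define n where "n = 2 * \<alpha> - 1"
  interpret g: gad k l n using assms a by unfold_locales (auto simp: n_def)
  have "card g.A = card {i. i < n \<and> even i}"
    unfolding g.A_def by (simp add: card_image inj_on_def)
  also have "\<dots> = \<alpha>" unfolding n_def by (rule card_evens)
  finally have cA: "card g.A = \<alpha>" .
  have "card g.V + card g.E \<le> 10 * n + 6 * n * k" using g.card_V g.card_E by simp
  also have "\<dots> \<le> (20 + 12 * k) * \<alpha>" using a by (simp add: n_def algebra_simps)
  finally have sz: "card g.V + card g.E \<le> (20 + 12 * k) * \<alpha>" .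
  have G: "gadget g.V g.E ends g.A \<alpha> k l" using g.gadget_main[unfolded cA] .
  show ?thesis using G sz by blast
qed

theorem lemma16:
  fixes k l :: nat
  assumes "l \<ge> 2" and "k \<ge> l"
  shows "\<exists>C::nat. \<forall>\<alpha>::nat. \<alpha> \<ge> 2 \<longrightarrow>
           (\<exists>(V::nat set) (E::nat set) (ends::nat \<Rightarrow> nat set) A.
              gadget V E ends A \<alpha> k l \<and> card V + card E \<le> C * \<alpha>)"
  using lemma16_aux[OF assms] by blast

end
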